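(* If $\sigma(x)/x\in\mathbb{Z}[\zeta_p]$, then the lattice $\varphi_{1/p^2}(M)$ (a rotated version of $D_n$) satisfies $d_{p,\min}(\varphi_{1/p^2}(M))\ge p^{(1-n)/2}$.
   Context: Let $n>1$ be an odd integer and $p$ a prime with $p\equiv 1 \pmod n$. Let $\zeta_p=e^{2\pi i/p}$, let $r$ be a primitive root modulo $p$, and let $\sigma$ be the automorphism of $\mathbb{Q}(\zeta_p)$ with $\sigma(\zeta_p)=\zeta_p^r$. Let $\mathbb{K}=\{y\in\mathbb{Q}(\zeta_p):\sigma^n(y)=y\}$ (totally real of degree $n$, embeddings into $\mathbb{R}$ given by restrictions of $\sigma^0,\dots,\sigma^{n-1}$). Let $\alpha=\prod_{j=0}^{(p-3)/2}(1-\zeta_p^{r^j})$, $\lambda$ an integer with $\lambda(r-1)\equiv1\pmod p$, $z=\zeta_p^{\lambda}\alpha(1-\zeta_p)$, $x=\mathrm{Tr}_{\mathbb{Q}(\zeta_p)/\mathbb{K}}(z)=\sum_{j=1}^{(p-1)/n}\sigma^{jn}(z)$. Let $M$ be the $\mathbb{Z}$-module generated by $x+\sigma(x),\ x-\sigma(x),\ \sigma(x)-\sigma^2(x),\dots,\sigma^{n-2}(x)-\sigma^{n-1}(x)$. For totally positive $\beta\in\mathbb{K}$, $\varphi_\beta(y)=(\sqrt{\sigma^0(\beta)}\sigma^0(y),\dots,\sqrt{\sigma^{n-1}(\beta)}\sigma^{n-1}(y))$. For a lattice $\Lambda\subset\mathbb{R}^n$ with all nonzero vectors having all coordinates nonzero,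 $d_{p,\min}(\Lambda)=\inf\{|y_1\cdots y_n|: 0\neq y\in\Lambda\}$. *)

theory Defs
  imports "HOL-Analysis.Analysis" "HOL-Number_Theory.Number_Theory"
begin

definition zeta :: "nat \<Rightarrow> complex" where
  "zeta p = exp (2 * of_real pi * \<i> / of_nat p)"

(* z = zeta^lam * alpha * (1 - zeta) written as an integer-coefficient expression in zeta;
   since sigma^k(zeta) = zeta^(r^k), sigma^k(z) = zfun p r lam (zeta p ^ (r^k)) *)
definition zfun :: "nat \<Rightarrow> nat \<Rightarrow> int \<Rightarrow> complex \<Rightarrow> complex" where
  "zfun p r lam w = w powi lam * (\<Prod>j\<in>{0..(p - 3) div 2}. (1 - w ^ (r ^ j))) * (1 - w)"

(* sigma^k(x), where x = sum_{j=1}^{(p-1)/n} sigma^{jn}(z) *)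
definition sigx :: "nat \<Rightarrow> nat \<Rightarrow> nat \<Rightarrow> int \<Rightarrow> nat \<Rightarrow> complex" where
  "sigx n p r lam k = (\<Sum>j\<in>{1..(p - 1) div n}. zfun p r lam (zeta p ^ (r ^ (j * n + k))))"

(* sigma^k(g_l) for the generators g_0 = x + sigma x, g_1 = x - sigma x,
   g_l = sigma^(l-1) x - sigma^l x  (2 <= l <= n-1) of M *)
definition sig_gen :: "nat \<Rightarrow> nat \<Rightarrow> nat \<Rightarrow> int \<Rightarrow> nat \<Rightarrow> nat \<Rightarrow> complex" where
  "sig_gen n p r lam l k =
     (if l = 0 then sigx n p r lam k + sigx n p r lam (k + 1)
      else if l = 1 then sigx n p r lam k - sigx n p r lam (k + 1)
      else sigx n p r lam (k + l - 1) - sigx n p r lam (k + l))"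

definition Mmod :: "nat \<Rightarrow> nat \<Rightarrow> nat \<Rightarrow> int \<Rightarrow> complex set" where
  "Mmod n p r lam = {(\<Sum>l<n. of_int (a l) * sig_gen n p r lam l 0) | a :: nat \<Rightarrow> int. True}"

(* phi_beta(M) for a (totally positive) rational beta, so sigma^i(beta) = beta;
   the vector has coordinates i < n, coordinate i being sqrt(beta) * sigma^i(y),
   computed by additivity of sigma^i from the integer coordinates of y in the generators *)
definition phiM :: "nat \<Rightarrow> nat \<Rightarrow> nat \<Rightarrow> int \<Rightarrow> real \<Rightarrow> (nat \<Rightarrow> complex) set" where
  "phiM n p r lam beta =
     {(\<lambda>i. of_real (sqrt beta) * (\<Sum>l<n. of_int (a l) * sig_gen n p r lam l i)) | a :: nat \<Rightarrow> int. True}"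

definition dpmin :: "nat \<Rightarrow> (nat \<Rightarrow> complex) set \<Rightarrow> real" where
  "dpmin n L = Inf {cmod (\<Prod>i<n. v i) | v. v \<in> L \<and> (\<exists>i<n. v i \<noteq> 0)}"

definition Zzeta :: "nat \<Rightarrow> complex set" where
  "Zzeta p = {(\<Sum>k<p. of_int (c k) * zeta p ^ k) | c :: nat \<Rightarrow> int. True}"

end

theory Submission
  imports Defs "HOL-Computational_Algebra.Computational_Algebra"
begin


lemma zeta_pow: "zeta p ^ k = exp (2 * of_real pi * \<i> * of_nat k / of_nat p)"
  unfolding zeta_def by (simp add: exp_of_nat_mult[symmetric] mult_ac)

lemma zeta_pow_eq: "p > 0 \<Longrightarrow> zeta p ^ j = zeta p ^ k \<longleftrightarrow> j mod p = k mod p"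
  unfolding zeta_pow by (rule complex_root_unity_eq) simp

lemma zeta_pow_eq_1: "p > 0 \<Longrightarrow> zeta p ^ j = 1 \<longleftrightarrow> p dvd j"
  unfolding zeta_pow by (rule complex_root_unity_eq_1) simp

lemma zeta_pow_mod: "p > 0 \<Longrightarrow> zeta p ^ (k mod p) = zeta p ^ k"
  by (simp add: zeta_pow_eq)

lemma zeta_pow_p: "p > 0 \<Longrightarrow> zeta p ^ p = 1"
  by (simp add: zeta_pow_eq_1)

lemma zeta_nz: "zeta p \<noteq> 0"
  unfolding zeta_def by simp

lemma sum_zeta_pow: assumes "p > 1" "\<not> p dvd m"
  shows "(\<Sum>a<p. zeta p ^ (a * m)) = 0"
proof -
  let ?w = "zeta p ^ m"
  have w1: "?w \<noteq> 1" using assms zeta_pow_eq_1[of p m] by simp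
  have "?w ^ p = 1" using assms by (simp flip: power_mult add: mult.commute[of m] power_mult zeta_pow_p)
  have "(\<Sum>a<p. zeta p ^ (a * m)) = (\<Sum>a<p. ?w ^ a)"
    by (simp add: power_mult mult.commute[of _ m])
  also have "\<dots> = (?w ^ p - 1) / (?w - 1)" using w1 by (simp add: geometric_sum)
  also have "\<dots> = 0" using \<open>?w ^ p = 1\<close> by simp
  finally show ?thesis .
qed

lemma sum_zeta_pow1: assumes "p > 1"
  shows "(\<Sum>a\<in>{1..<p}. zeta p ^ (a * m)) = (if p dvd m then of_nat p - 1 else -1)"
proof -
  have e: "{..<p} = insert 0 {1..<p}" using assms by auto
  have "(\<Sum>a<p. zeta p ^ (a * m)) = 1 + (\<Sum>a\<in>{1..<p}. zeta p ^ (a * m))"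
    by (subst e) simp
  moreover have "(\<Sum>a<p. zeta p ^ (a * m)) = (if p dvd m then of_nat p else 0)"
  proof (cases "p dvd m")
    case True
    then have "\<And>a. zeta p ^ (a * m) = 1" using assms by (simp add: zeta_pow_eq_1)
    then show ?thesis using True by simp
  qed (use sum_zeta_pow[OF assms] in auto)
  ultimately have "(\<Sum>a\<in>{1..<p}. zeta p ^ (a * m)) = (if p dvd m then of_nat p else 0) - 1"
    by (simp add: algebra_simps)
  then show ?thesis by simp
qed

lemma prod_zeta_poly: assumes "p > 1"
  shows "(\<Prod>a\<in>{1..<p}. [:- (zeta p ^ a), 1:]) = (\<Sum>k<p. Polynomial.monom (1::complex) k)"
proof -
  define P where "P = (\<Prod>a<p. [:- (zeta p ^ a), 1:])"
  define Q where "Q = Polynomial.monom (1::complex) p - 1"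
  have degP: "degree P = p" unfolding P_def by (subst degree_prod_eq_sum_degree) auto
  have lcP: "lead_coeff P = 1" unfolding P_def by (simp add: lead_coeff_prod)
  have degQ0: "degree Q = p"
  proof -
    have "Q = Polynomial.monom 1 p + (- 1)" unfolding Q_def by simp
    also have "degree \<dots> = p" using assms
      by (subst degree_add_eq_left) (simp_all add: degree_monom_eq)
    finally show ?thesis .
  qed
  have degQ: "degree Q = p" "lead_coeff Q = 1" using assms degQ0 unfolding Q_def
    by (simp_all add: degQ0[unfolded Q_def])
  have "degree (Q - P) < p"
  proof (rule ccontr)
    assume "\<not> degree (Q - P) < p"
    moreover have "degree (Q - P) \<le> p" using degP degQ by (metis degree_diff_le le_refl)
    ultimately have "degree (Q - P) = p" by simp
    then have "Polynomial.coeff (Q - P) p \<noteq> 0" using assms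
      by (metis leading_coeff_0_iff degree_0 not_one_less_zero)
    then show False using degP lcP degQ by simp
  qed
  moreover have roots: "zeta p ^ a \<in> {x. poly (Q - P) x = 0}" if "a < p" for a
  proof -
    have "poly P (zeta p ^ a) = 0" unfolding P_def poly_prod
      using that by (intro prod_zero) auto
    moreover have "poly Q (zeta p ^ a) = 0" unfolding Q_def using assms
      by (simp add: poly_monom flip: power_mult add: mult.commute[of a] power_mult zeta_pow_p)
    ultimately show ?thesis by simp
  qed
  have inj: "inj_on (\<lambda>a. zeta p ^ a) {..<p}" using assms
    by (auto simp: inj_on_def zeta_pow_eq)
  have "Q - P = 0"
  proof (rule ccontr)
    assume nz: "Q - P \<noteq> 0"
    have "(\<lambda>a. zeta p ^ a) ` {..<p} \<subseteq> {x. poly (Q - P) x = 0}" using roots by auto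
    then have "card ((\<lambda>a. zeta p ^ a) ` {..<p}) \<le> card {x. poly (Q - P) x = 0}"
      by (intro card_mono poly_roots_finite nz)
    also have "\<dots> \<le> degree (Q - P)" by (rule card_poly_roots_bound[OF nz])
    finally show False using \<open>degree (Q - P) < p\<close> card_image[OF inj] by simp
  qed
  hence QP: "Q = P" by simp
  have e: "{..<p} = insert 0 {1..<p}" using assms by auto
  have "P = [:-1, 1:] * (\<Prod>a\<in>{1..<p}. [:- (zeta p ^ a), 1:])"
    unfolding P_def by (subst e) simp
  moreover have "Q = [:-1, 1:] * (\<Sum>k<p. Polynomial.monom (1::complex) k)"
  proof -
    have "[:-1, 1:] * (\<Sum>k<p. Polynomial.monom (1::complex) k) = (\<Sum>k<p. Polynomial.monom 1 (Suc k) - Polynomial.monom 1 k)"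
      unfolding sum_distrib_left
    proof (rule sum.cong)
      fix k show "[:-1, 1:] * Polynomial.monom (1::complex) k = Polynomial.monom 1 (Suc k) - Polynomial.monom 1 k"
        by (rule poly_eqI) (simp add: coeff_monom_mult coeff_pCons split: nat.splits)
    qed simp
    also have "\<dots> = Polynomial.monom 1 p - Polynomial.monom 1 0" by (rule sum_lessThan_telescope)
    finally show ?thesis unfolding Q_def by (metis monom_0 one_pCons)
  qed
  ultimately show ?thesis using QP by (metis mult_cancel_left pCons_eq_0_iff zero_neq_one)
qed

lemma prod_one_minus_zeta: assumes "p > 1"
  shows "(\<Prod>a\<in>{1..<p}. 1 - zeta p ^ a) = of_nat p"
proof -
  have "poly (\<Prod>a\<in>{1..<p}. [:- (zeta p ^ a), 1:]) 1 = poly (\<Sum>k<p. Polynomial.monom (1::complex) k) 1"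
    using prod_zeta_poly[OF assms] by simp
  then show ?thesis by (simp add: poly_prod poly_sum poly_monom)
qed



abbreviation ip :: "int poly \<Rightarrow> complex poly" where "ip \<equiv> map_poly of_int"

lemma ip_coeff [simp]: "Polynomial.coeff (ip g) k = of_int (Polynomial.coeff g k)"
  by (simp add: coeff_map_poly)

lemma ip_add [simp]: "ip (f + g) = ip f + ip g"
  by (rule poly_eqI) simp
lemma ip_diff [simp]: "ip (f - g) = ip f - ip g"
  by (rule poly_eqI) simp
lemma ip_minus [simp]: "ip (- g) = - ip g"
  by (rule poly_eqI) simp
lemma ip_mult [simp]: "ip (f * g) = ip f * ip g"
  by (rule poly_eqI) (simp add: coeff_mult)
lemma ip_1 [simp]: "ip 1 = 1"
  by (rule poly_eqI) (simp add: coeff_1)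
lemma ip_0 [simp]: "ip 0 = 0"
  by simp
lemma ip_monom [simp]: "ip (Polynomial.monom c k) = Polynomial.monom (of_int c) k"
  by (rule poly_eqI) (simp add: coeff_monom)
lemma ip_const [simp]: "ip [:c:] = [:of_int c:]"
  by (rule poly_eqI) (simp add: coeff_pCons split: nat.splits)
lemma ip_prod [simp]: "ip (\<Prod>i\<in>A. f i) = (\<Prod>i\<in>A. ip (f i))"
  by (induction A rule: infinite_finite_induct) auto
lemma ip_sum [simp]: "ip (\<Sum>i\<in>A. f i) = (\<Sum>i\<in>A. ip (f i))"
  by (induction A rule: infinite_finite_induct) auto
lemma ip_power [simp]: "ip (f ^ k) = ip f ^ k"
  by (induction k) auto
lemma ip_pcompose [simp]: "ip (pcompose f g) = pcompose (ip f) (ip g)"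
proof (induction f)
  case 0 then show ?case by simp
next
  case (pCons a f)
  have "ip (pCons a f) = [:of_int a:] + pCons 0 (ip f)"
    by (rule poly_eqI) (simp add: coeff_pCons split: nat.splits)
  moreover have "pCons a f = [:a:] + pCons 0 f" by simp
  ultimately show ?case using pCons
    by (simp only: pcompose_pCons ip_add ip_mult ip_const) (simp add: pcompose_pCons)
qed

definition ev :: "int poly \<Rightarrow> complex \<Rightarrow> complex" where "ev g x = poly (ip g) x"

lemma ev_add [simp]: "ev (f + g) x = ev f x + ev g x" by (simp add: ev_def)
lemma ev_diff [simp]: "ev (f - g) x = ev f x - ev g x" by (simp add: ev_def)
lemma ev_mult [simp]: "ev (f * g) x = ev f x * ev g x" by (simp add: ev_def)
lemma ev_prod [simp]: "ev (\<Prod>i\<in>A. f i) x = (\<Prod>i\<in>A. ev (f i) x)" by (simp add: ev_def poly_prod)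
lemma ev_sum [simp]: "ev (\<Sum>i\<in>A. f i) x = (\<Sum>i\<in>A. ev (f i) x)" by (simp add: ev_def poly_sum)
lemma ev_power [simp]: "ev (f ^ k) x = ev f x ^ k" by (simp add: ev_def)
lemma ev_monom [simp]: "ev (Polynomial.monom c k) x = of_int c * x ^ k" by (simp add: ev_def poly_monom)
lemma ev_1 [simp]: "ev 1 x = 1" by (simp add: ev_def)
lemma ev_const [simp]: "ev [:c:] x = of_int c" by (simp add: ev_def)
lemma ev_pcomp_monom [simp]: "ev (pcompose f (Polynomial.monom 1 k)) x = ev f (x ^ k)"
  by (simp add: ev_def poly_pcompose poly_monom)

lemma ev_altdef: "ev g x = (\<Sum>k\<le>degree (ip g). of_int (Polynomial.coeff g k) * x ^ k)"
  unfolding ev_def by (simp add: poly_altdef)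

lemma int_of_invariant:
  assumes p: "prime p" and inv: "\<And>a. a \<in> {1..<p} \<Longrightarrow> ev g (zeta p ^ a) = c"
  shows "c \<in> \<int>"
proof -
  have p1: "p > 1" using p prime_gt_1_nat by blast
  define D where "D = degree (ip g)"
  have pk: "\<And>k. p + k - Suc 0 = k + (p - Suc 0)" using p1 by auto
  define T where "T = (\<Sum>a\<in>{1..<p}. zeta p ^ (a * (p - 1)) * ev g (zeta p ^ a))"
  have ndvd: "\<not> p dvd (p - 1)" using p1 by (metis dvd_diffD1 dvd_refl le_eq_less_or_eq less_imp_le_nat nat_dvd_1_iff_1 not_less_iff_gr_or_eq zero_less_diff)
  have "T = (\<Sum>a\<in>{1..<p}. zeta p ^ (a * (p - 1))) * c"
    unfolding T_def sum_distrib_right using inv by simp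
  also have "\<dots> = - c" using sum_zeta_pow1[OF p1, of "p - 1"] ndvd by simp
  finally have T1: "T = - c" .
  have helper: "\<And>a k. zeta p ^ (a * (p - 1 + k)) = zeta p ^ (a * (p - 1)) * (zeta p ^ a) ^ k"
    by (simp only: distrib_left power_add power_mult)
  have "T = (\<Sum>a\<in>{1..<p}. \<Sum>k\<le>D. of_int (Polynomial.coeff g k) * zeta p ^ (a * (p - 1 + k)))"
    unfolding helper T_def ev_altdef D_def[symmetric] sum_distrib_left
    by (simp add: mult_ac)
  also have "\<dots> = (\<Sum>k\<le>D. of_int (Polynomial.coeff g k) * (\<Sum>a\<in>{1..<p}. zeta p ^ (a * (p - 1 + k))))"
    by (subst sum.swap) (simp add: sum_distrib_left)
  also have "\<dots> = (\<Sum>k\<le>D. of_int (Polynomial.coeff g k) * (if p dvd (p - 1 + k) then of_nat p - 1 else - 1))"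
    by (simp only: sum_zeta_pow1[OF p1])
  also have "\<dots> = of_int (\<Sum>k\<le>D. Polynomial.coeff g k * (if p dvd (p - 1 + k) then int p - 1 else - 1))"
    by (simp add: of_int_sum) (intro sum.cong refl, auto)
  finally have "- c = of_int (\<Sum>k\<le>D. Polynomial.coeff g k * (if p dvd (p - 1 + k) then int p - 1 else - 1))"
    using T1 by simp
  then have "c = of_int (- (\<Sum>k\<le>D. Polynomial.coeff g k * (if p dvd (p - 1 + k) then int p - 1 else - 1)))"
    by (simp only: of_int_minus) (metis minus_minus)
  then show ?thesis by (metis Ints_of_int)
qed



lemma ip_smult [simp]: "ip (Polynomial.smult c f) = Polynomial.smult (of_int c) (ip f)"
  by (rule poly_eqI) simp
lemma ev_smult [simp]: "ev (Polynomial.smult c f) x = of_int c * ev f x" by (simp add: ev_def)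

lemma eisenstein_contra:
  fixes A B :: "int poly" and q :: int
  assumes q: "prime q"
    and low: "\<forall>k < degree (A * B). q dvd Polynomial.coeff (A * B) k"
    and lead: "\<not> q dvd lead_coeff (A * B)"
    and c0: "\<not> q^2 dvd Polynomial.coeff (A * B) 0"
    and dA: "degree A \<ge> 1" and dB: "degree B \<ge> 1"
    and a0: "q dvd Polynomial.coeff A 0"
  shows False
proof -
  have nzA: "A \<noteq> 0" and nzB: "B \<noteq> 0" using dA dB by auto
  have degAB: "degree (A * B) = degree A + degree B" using nzA nzB by (rule degree_mult_eq)
  have b0: "\<not> q dvd Polynomial.coeff B 0"
  proof
    assume "q dvd Polynomial.coeff B 0"
    with a0 have "q * q dvd Polynomial.coeff A 0 * Polynomial.coeff B 0" by (rule mult_dvd_mono)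
    then show False using c0 by (simp add: power2_eq_square coeff_mult_0)
  qed
  have la: "\<not> q dvd lead_coeff A"
    using lead by (metis lead_coeff_mult dvd_mult2)
  define i where "i = (LEAST i. \<not> q dvd Polynomial.coeff A i)"
  have ai: "\<not> q dvd Polynomial.coeff A i" unfolding i_def by (rule LeastI[of _ "degree A"]) (rule la)
  have ile: "i \<le> degree A" unfolding i_def by (rule Least_le) (rule la)
  have below: "\<And>j. j < i \<Longrightarrow> q dvd Polynomial.coeff A j"
    unfolding i_def using not_less_Least by blast
  have "i < degree (A * B)" using ile dB degAB by simp
  with low have qd: "q dvd Polynomial.coeff (A * B) i" by blast
  have "Polynomial.coeff (A * B) i = Polynomial.coeff A i * Polynomial.coeff B 0 +
      (\<Sum>j<i. Polynomial.coeff A j * Polynomial.coeff B (i - j))"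
  proof -
    have "{..i} = insert i {..<i}" by auto
    then show ?thesis unfolding coeff_mult by simp
  qed
  moreover have "q dvd (\<Sum>j<i. Polynomial.coeff A j * Polynomial.coeff B (i - j))"
    by (intro dvd_sum dvd_mult2 below) simp
  ultimately have "q dvd Polynomial.coeff A i * Polynomial.coeff B 0"
    using qd by (simp add: dvd_add_left_iff)
  then show False using ai b0 q by (simp add: prime_dvd_mult_iff)
qed

definition cyc :: "nat \<Rightarrow> int poly" where "cyc p = (\<Sum>k<p. Polynomial.monom 1 k)"

lemma coeff_cyc: "Polynomial.coeff (cyc p) k = (if k < p then 1 else 0)"
  unfolding cyc_def by (simp add: coeff_sum coeff_monom)

lemma degree_cyc: "p \<ge> 1 \<Longrightarrow> degree (cyc p) = p - 1"
proof (rule antisym)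
  assume "p \<ge> 1"
  show "degree (cyc p) \<le> p - 1" by (rule degree_le) (auto simp: coeff_cyc)
  show "p - 1 \<le> degree (cyc p)" by (rule le_degree) (use \<open>p \<ge> 1\<close> in \<open>simp add: coeff_cyc\<close>)
qed

lemma cyc_nz: "p \<ge> 1 \<Longrightarrow> cyc p \<noteq> 0"
proof
  assume "p \<ge> 1" "cyc p = 0"
  then have "Polynomial.coeff (cyc p) 0 = 0" by simp
  then show False using \<open>p \<ge> 1\<close> by (simp add: coeff_cyc)
qed

lemma ev_cyc_zeta: assumes "p > 1" "\<not> p dvd c" shows "ev (cyc p) (zeta p ^ c) = 0"
proof -
  have "ev (cyc p) (zeta p ^ c) = (\<Sum>k<p. zeta p ^ (k * c))"
    unfolding cyc_def by (simp add: ev_def poly_sum poly_monom) (intro sum.cong refl, simp only: power_mult[symmetric] mult.commute)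
  also have "\<dots> = 0" by (rule sum_zeta_pow[OF assms])
  finally show ?thesis .
qed

lemma cyc_times: "[:-1, 1:] * cyc p = Polynomial.monom 1 p - 1"
proof -
  have "[:-1, 1:] * cyc p = (\<Sum>k<p. Polynomial.monom 1 (Suc k) - Polynomial.monom 1 k)"
    unfolding sum_distrib_left cyc_def
  proof (rule sum.cong)
    fix k show "[:-1, 1:] * Polynomial.monom (1::int) k = Polynomial.monom 1 (Suc k) - Polynomial.monom 1 k"
      by (rule poly_eqI) (simp add: coeff_monom_mult coeff_pCons split: nat.splits)
  qed simp
  also have "\<dots> = Polynomial.monom 1 p - Polynomial.monom 1 0" by (rule sum_lessThan_telescope)
  finally show ?thesis by (metis monom_0 one_pCons)
qed

lemma pcompose_power': "pcompose (f ^ n) g = (pcompose f g) ^ n"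
  by (induction n) (simp_all add: pcompose_1 pcompose_mult)

lemma coeff_psi:
  assumes "k < p"
  shows "Polynomial.coeff (pcompose (cyc p) [:1, 1:]) k = int (p choose (Suc k))"
proof -
  define psi where "psi = pcompose (cyc p) [:1, 1:]"
  have "pcompose ([:-1, 1:] * cyc p) [:1, 1:] = pcompose (Polynomial.monom 1 p - 1) [:1, 1:]"
    by (simp only: cyc_times)
  then have eq: "[:0, 1:] * psi = [:1, 1:] ^ p - 1"
    unfolding psi_def pcompose_mult pcompose_diff monom_altdef
    by (simp add: pcompose_pCons pcompose_power' pcompose_1)
  have "Polynomial.coeff psi k = Polynomial.coeff ([:0, 1:] * psi) (Suc k)" by simp
  also have "\<dots> = Polynomial.coeff ([:1, 1:] ^ p) (Suc k)" unfolding eq by (simp add: coeff_1)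
  also have "\<dots> = int (p choose (Suc k))" using assms by (subst coeff_linear_poly_power) auto
  finally show ?thesis unfolding psi_def .
qed


lemma cyc_irreducible: assumes p: "prime p" shows "irreducible (cyc p)"
proof -
  have p1: "p > 1" using p prime_gt_1_nat by blast
  have dc: "degree (cyc p) = p - 1" using p1 degree_cyc by simp
  define psi where "psi = pcompose (cyc p) [:1, 1:]"
  have dpsi: "degree psi = p - 1" unfolding psi_def by (simp add: degree_pcompose dc)
  have ip: "prime (int p)" using p by simp
  show ?thesis
  proof (rule irreducibleI)
    show "cyc p \<noteq> 0" using p1 cyc_nz by simp
    show "\<not> cyc p dvd 1"
    proof
      assume "cyc p dvd 1"
      then obtain c where "cyc p = [:c:]" by (auto simp: is_unit_poly_iff)
      then have "degree (cyc p) = 0" by simp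
      with dc p1 show False by simp
    qed
  next
    fix A B assume AB: "cyc p = A * B"
    have u: "X dvd 1" if d0: "degree X = 0" and e0: "cyc p = X * Y" for X Y :: "int poly"
    proof -
      obtain a where Xa: "X = [:a:]" using degree_eq_zeroE[OF d0] by blast
      have "Polynomial.coeff (cyc p) 0 = a * Polynomial.coeff Y 0"
        using e0 Xa by simp
      then have "a * Polynomial.coeff Y 0 = 1" using p1 by (simp add: coeff_cyc)
      then have "a dvd 1" by (metis dvdI)
      then show ?thesis using Xa by (simp add: is_unit_const_poly_iff)
    qed
    show "A dvd 1 \<or> B dvd 1"
    proof (cases "degree A = 0 \<or> degree B = 0")
      case True
      then show ?thesis
      proof
        assume "degree A = 0" then show ?thesis using u[OF _ AB] by blast
      next
        assume "degree B = 0" then show ?thesis using u[of B A] AB by (simp add: mult.commute)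
      qed
    next
      case False
      define A' where "A' = pcompose A [:1, 1:]"
      define B' where "B' = pcompose B [:1, 1:]"
      have psiAB: "psi = A' * B'" unfolding psi_def A'_def B'_def AB by (simp add: pcompose_mult)
      have dA: "degree A' \<ge> 1" "degree B' \<ge> 1" using False unfolding A'_def B'_def
        by (auto simp: degree_pcompose)
      have low: "\<forall>k < degree (A' * B'). int p dvd Polynomial.coeff (A' * B') k"
      proof (intro allI impI)
        fix k assume "k < degree (A' * B')"
        then have k: "k < p - 1" using psiAB dpsi by simp
        have "p dvd (p choose Suc k)" using k p by (intro dvd_choose_prime) auto
        then show "int p dvd Polynomial.coeff (A' * B') k"
          using k by (simp flip: psiAB add: psi_def coeff_psi int_dvd_int_iff)
      qed
      have lead: "\<not> int p dvd lead_coeff (A' * B')"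
      proof -
        have "lead_coeff (A' * B') = 1" using p1
          by (simp flip: psiAB add: dpsi) (simp add: psi_def coeff_psi)
        then show ?thesis using p1 by simp
      qed
      have "Polynomial.coeff psi 0 = int (p choose (Suc 0))"
        unfolding psi_def by (rule coeff_psi) (use p1 in simp)
      then have c0: "Polynomial.coeff (A' * B') 0 = int p"
        by (simp flip: psiAB)
      have c0': "\<not> (int p)^2 dvd Polynomial.coeff (A' * B') 0"
      proof
        assume "(int p)^2 dvd Polynomial.coeff (A' * B') 0"
        then have "int p * int p dvd int p * 1" using c0 by (simp add: power2_eq_square)
        then have "int p dvd 1" using p1 by (subst (asm) dvd_mult_cancel_left) auto
        then show False using p1 by simp
      qed
      have "int p dvd Polynomial.coeff A' 0 * Polynomial.coeff B' 0"
        using c0 by (simp add: coeff_mult_0 flip: coeff_mult_0)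
      then have "int p dvd Polynomial.coeff A' 0 \<or> int p dvd Polynomial.coeff B' 0"
        using ip by (simp add: prime_dvd_mult_iff)
      then show ?thesis
      proof
        assume "int p dvd Polynomial.coeff A' 0"
        from eisenstein_contra[OF ip low lead c0' dA this] show ?thesis ..
      next
        assume b: "int p dvd Polynomial.coeff B' 0"
        have low': "\<forall>k < degree (B' * A'). int p dvd Polynomial.coeff (B' * A') k"
          using low by (simp add: mult.commute)
        have lead': "\<not> int p dvd lead_coeff (B' * A')" using lead by (simp add: mult.commute)
        have c0'': "\<not> (int p)^2 dvd Polynomial.coeff (B' * A') 0" using c0' by (simp add: mult.commute)
        from eisenstein_contra[OF ip low' lead' c0'' dA(2) dA(1) b] show ?thesis ..
      qed
    qed
  qed
qed



lemma cyc_prime: "prime p \<Longrightarrow> prime_elem (cyc p)"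
  by (rule irreducible_imp_prime_poly) (rule cyc_irreducible)

lemma ev_zero_degree:
  assumes p: "prime p" and g: "g \<noteq> 0" "ev g (zeta p) = 0"
  shows "degree g \<ge> p - 1"
proof -
  have p1: "p > 1" using p prime_gt_1_nat by blast
  define S where "S = {g::int poly. g \<noteq> 0 \<and> ev g (zeta p) = 0}"
  have "g \<in> S" using g by (simp add: S_def)
  then obtain g0 where g0: "g0 \<in> S" and min: "\<And>h. h \<in> S \<Longrightarrow> degree g0 \<le> degree h"
    using ex_has_least_nat[of "\<lambda>h. h \<in> S" g degree] by blast
  have g0nz: "g0 \<noteq> 0" and g0z: "ev g0 (zeta p) = 0" using g0 by (auto simp: S_def)
  obtain q r where qr: "pseudo_divmod (cyc p) g0 = (q, r)" by (cases "pseudo_divmod (cyc p) g0") auto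
  define c where "c = lead_coeff g0 ^ (Suc (degree (cyc p)) - degree g0)"
  have eq: "Polynomial.smult c (cyc p) = g0 * q + r" and rd: "r = 0 \<or> degree r < degree g0"
    using pseudo_divmod[OF g0nz qr] by (simp_all add: c_def)
  have cnz: "c \<noteq> 0" using g0nz by (simp add: c_def)
  have cz: "ev (cyc p) (zeta p) = 0" using ev_cyc_zeta[OF p1, of 1] p1 by simp
  have "ev r (zeta p) = 0"
  proof -
    have "ev (Polynomial.smult c (cyc p)) (zeta p) = ev (g0 * q + r) (zeta p)" by (simp only: eq)
    then show ?thesis using cz g0z by simp
  qed
  have r0: "r = 0"
  proof (rule ccontr)
    assume "r \<noteq> 0"
    then have "r \<in> S" using \<open>ev r (zeta p) = 0\<close> by (simp add: S_def)
    with min rd \<open>r \<noteq> 0\<close> show False by fastforce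
  qed
  have "g0 * q = [:c:] * cyc p" using eq r0 by simp
  then have "cyc p dvd g0 * q" by (metis dvd_triv_right)
  then have "cyc p dvd g0 \<or> cyc p dvd q" using cyc_prime[OF p] by (simp add: prime_elem_dvd_mult_iff)
  then have "degree (cyc p) \<le> degree g0"
  proof
    assume "cyc p dvd g0" then show ?thesis using g0nz by (rule dvd_imp_degree_le)
  next
    assume "cyc p dvd q"
    then obtain s where s: "q = cyc p * s" by (elim dvdE)
    have "cyc p * (g0 * s) = cyc p * [:c:]" using \<open>g0 * q = [:c:] * cyc p\<close> s by (simp add: mult_ac)
    then have gs: "g0 * s = [:c:]" using cyc_nz[of p] p1 by (subst (asm) mult_left_cancel) auto
    then have snz: "s \<noteq> 0" using cnz by auto
    have "degree g0 = 0" using degree_mult_eq[OF g0nz snz] gs by simp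
    then obtain a where "g0 = [:a:]" using degree_eq_zeroE by blast
    then show ?thesis using g0nz g0z by simp
  qed
  then have "degree g0 \<ge> p - 1" using degree_cyc[of p] p1 by simp
  moreover have "degree g0 \<le> degree g" using min \<open>g \<in> S\<close> by blast
  ultimately show ?thesis by simp
qed

lemma cyc_dvd:
  assumes p: "prime p" and g: "ev g (zeta p) = 0"
  shows "cyc p dvd g"
proof -
  have p1: "p > 1" using p prime_gt_1_nat by blast
  have cnz: "cyc p \<noteq> 0" using cyc_nz[of p] p1 by simp
  have lc: "lead_coeff (cyc p) = 1" using p1 by (simp add: degree_cyc coeff_cyc)
  obtain q r where qr: "pseudo_divmod g (cyc p) = (q, r)" by (cases "pseudo_divmod g (cyc p)") auto
  have eq: "g = cyc p * q + r" and rd: "r = 0 \<or> degree r < degree (cyc p)"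
    using pseudo_divmod[OF cnz qr] lc by simp_all
  have cz: "ev (cyc p) (zeta p) = 0" using ev_cyc_zeta[OF p1, of 1] p1 by simp
  have "ev r (zeta p) = 0"
  proof -
    have "ev g (zeta p) = ev (cyc p * q + r) (zeta p)" by (simp only: flip: eq)
    then show ?thesis using cz g by simp
  qed
  have "r = 0"
  proof (rule ccontr)
    assume "r \<noteq> 0"
    then have "degree r \<ge> p - 1" using ev_zero_degree[OF p] \<open>ev r (zeta p) = 0\<close> by blast
    then show False using rd \<open>r \<noteq> 0\<close> degree_cyc[of p] p1 by simp
  qed
  then show ?thesis using eq by simp
qed

lemma nonvanish:
  assumes p: "prime p" and b: "\<not> p dvd b" and a: "\<not> p dvd a"
    and z: "ev g (zeta p ^ b) = 0"
  shows "ev g (zeta p ^ a) = 0"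
proof -
  have p1: "p > 1" using p prime_gt_1_nat by blast
  define h where "h = pcompose g (Polynomial.monom 1 b)"
  have hz: "ev h (zeta p) = 0" unfolding h_def using z by simp
  obtain q where hq: "h = cyc p * q" using cyc_dvd[OF p hz] by (elim dvdE)
  define c where "c = b ^ (p - 2) * a"
  have cnd: "\<not> p dvd c" unfolding c_def using p a b
    by (simp add: prime_dvd_mult_iff) (metis prime_dvd_power)
  have "[b ^ (p - 1) = 1] (mod p)" using fermat_theorem[OF p b] .
  then have "[b ^ (p - 1) * a = 1 * a] (mod p)" by (rule cong_mult) simp
  moreover have "b ^ (p - 1) * a = c * b" unfolding c_def using p1
    by (metis Suc_diff_Suc Suc_1 mult.commute mult.left_commute power_Suc diff_Suc_eq_diff_pred)
  ultimately have cb: "(c * b) mod p = a mod p" by (simp add: cong_def)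
  have "ev h (zeta p ^ c) = 0" unfolding hq using ev_cyc_zeta[OF p1 cnd] by simp
  moreover have "ev h (zeta p ^ c) = ev g (zeta p ^ (c * b))" unfolding h_def by (simp add: power_mult)
  moreover have "zeta p ^ (c * b) = zeta p ^ a" using cb p1 by (simp add: zeta_pow_eq)
  ultimately show ?thesis by simp
qed



lemma prod_reindex_primroot:
  assumes p: "prime p" and r: "residue_primroot p r"
  shows "(\<Prod>a\<in>{1..<p}. f (zeta p ^ a)) = (\<Prod>k<p-1. f (zeta p ^ (r ^ k)))"
proof -
  have p1: "p > 1" using p prime_gt_1_nat by blast
  have bij: "bij_betw (\<lambda>i. r ^ i mod p) {..<p-1} {1..<p}"
  proof -
    have "totatives p = {1..<p}" using p by (auto simp: totatives_prime)
    then show ?thesis using residue_primroot_is_generator[OF p1 r] p by (simp add: totient_prime)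
  qed
  have "(\<Prod>k<p-1. f (zeta p ^ (r ^ k))) = (\<Prod>k<p-1. f (zeta p ^ (r ^ k mod p)))"
    using p1 by (simp add: zeta_pow_mod)
  also have "\<dots> = (\<Prod>a\<in>{1..<p}. f (zeta p ^ a))"
    by (rule prod.reindex_bij_betw[OF bij, of "\<lambda>a. f (zeta p ^ a)"])
  finally show ?thesis by simp
qed

lemma prod_reindex_mult:
  assumes p: "prime p" and b: "\<not> p dvd b"
  shows "(\<Prod>a\<in>{1..<p}. f (zeta p ^ (b * a))) = (\<Prod>a\<in>{1..<p}. f (zeta p ^ a))"
proof -
  have p1: "p > 1" using p prime_gt_1_nat by blast
  have cop: "coprime b p" using p b by (metis prime_imp_coprime coprime_commute)
  define h where "h a = (b * a) mod p" for a
  have inj: "inj_on h {1..<p}"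
  proof (rule inj_onI)
    fix x y assume "x \<in> {1..<p}" "y \<in> {1..<p}" "h x = h y"
    then have "[b * x = b * y] (mod p)" by (simp add: h_def cong_def)
    then have "[x = y] (mod p)" using cong_mult_lcancel_nat[OF cop] by simp
    then show "x = y" using \<open>x \<in> _\<close> \<open>y \<in> _\<close> by (simp add: cong_def)
  qed
  have sub: "h ` {1..<p} \<subseteq> {1..<p}"
  proof
    fix y assume "y \<in> h ` {1..<p}"
    then obtain x where x: "x \<in> {1..<p}" "y = h x" by blast
    have "\<not> p dvd b * x" using p b x by (simp add: prime_dvd_mult_iff, use nat_dvd_not_less in fastforce)
    then have "y \<noteq> 0" using x by (simp add: h_def dvd_eq_mod_eq_0)
    moreover have "y < p" using x p1 by (simp add: h_def)
    ultimately show "y \<in> {1..<p}" by simp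
  qed
  have img: "h ` {1..<p} = {1..<p}" by (rule endo_inj_surj[OF _ sub inj]) simp
  have "(\<Prod>a\<in>{1..<p}. f (zeta p ^ (b * a))) = (\<Prod>a\<in>{1..<p}. f (zeta p ^ h a))"
    using p1 by (simp add: h_def zeta_pow_mod)
  also have "\<dots> = (\<Prod>a\<in>h ` {1..<p}. f (zeta p ^ a))"
    by (rule prod.reindex[OF inj, symmetric, unfolded comp_def])
  finally show ?thesis using img by simp
qed

lemma periodic_mod:
  fixes f :: "nat \<Rightarrow> 'a" and n q i :: nat
  assumes per: "\<And>k. f (k + n) = f k"
  shows "f (q * n + i) = f i"
proof (induction q)
  case 0 then show ?case by simp
next
  case (Suc q)
  have "Suc q * n + i = (q * n + i) + n" by simp
  then show ?case using per[of "q * n + i"] Suc by (metis)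
qed

lemma prod_shift_periodic:
  fixes f :: "nat \<Rightarrow> 'a::comm_monoid_mult"
  assumes per: "\<And>k. f (k + n) = f k" and n: "n > 0"
  shows "(\<Prod>i<n. f (k + i)) = (\<Prod>i<n. f i)"
proof (induction k)
  case 0 then show ?case by simp
next
  case (Suc k)
  define g where "g i = f (k + i)" for i
  have gn: "g n = g 0" unfolding g_def using per[of k] by (simp add: add.commute)
  have "(\<Prod>i<n. f (Suc k + i)) = (\<Prod>i<n. g (Suc i))" by (simp add: g_def)
  also have "\<dots> = (\<Prod>i\<in>{Suc 0..<Suc n}. g i)"
    by (simp only: prod.shift_bounds_Suc_ivl atLeast0LessThan[symmetric])
  also have "\<dots> = (\<Prod>i\<in>{1..<n}. g i) * g n" using n by (subst prod.atLeastLessThan_Suc) auto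
  also have "\<dots> = g 0 * (\<Prod>i\<in>{1..<n}. g i)" using gn by (simp add: mult.commute)
  also have "\<dots> = (\<Prod>i<n. g i)"
    using n by (simp add: atLeast0LessThan[symmetric] prod.atLeast_Suc_lessThan)
  finally show ?case using Suc by (simp add: g_def)
qed



lemma ev_lin [simp]: "ev [:1, -1:] x = 1 - x"
  unfolding ev_def by (simp add: map_poly_pCons)

lemma primroot_not_dvd:
  assumes p: "prime p" and r: "residue_primroot p r" shows "\<not> p dvd r ^ k"
proof
  assume "p dvd r ^ k"
  then have "p dvd r" using p prime_dvd_power by blast
  moreover have "coprime p r" using r by (simp add: residue_primroot_def)
  ultimately have "is_unit p" using coprime_common_divisor[of p r p] by simp
  then show False using p by simp
qed

lemma norm_int:
  fixes Y W :: "int poly"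
  assumes p: "prime p" and r: "residue_primroot p r" and n: "n > 0" and ndvd: "n dvd (p - 1)"
    and per: "\<And>k. ev Y (zeta p ^ (r ^ (k + n))) = ev Y (zeta p ^ (r ^ k))"
    and YW: "Y = [:1, -1:] ^ m * W"
    and nz: "ev Y (zeta p ^ (r ^ i0)) \<noteq> 0"
  shows "\<exists>Ni Mi. (\<Prod>i<n. ev Y (zeta p ^ (r ^ i))) = of_int Ni \<and> Ni \<noteq> 0 \<and> Mi \<noteq> 0 \<and>
             Ni ^ ((p - 1) div n) = int p ^ m * Mi"
proof -
  have p1: "p > 1" using p prime_gt_1_nat by blast
  define e where "e = (p - 1) div n"
  have en: "p - 1 = e * n" using ndvd by (simp add: e_def)
  define f where "f k = ev Y (zeta p ^ (r ^ k))" for k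
  have perf: "\<And>k. f (k + n) = f k" using per by (simp add: f_def)
  define N where "N = (\<Prod>i<n. f i)"
  have allnz: "ev Y (zeta p ^ b) \<noteq> 0" if "\<not> p dvd b" for b
    using nonvanish[OF p that primroot_not_dvd[OF p r]] nz by blast
  have bij: "bij_betw (\<lambda>i. r ^ i mod p) {..<p-1} {1..<p}"
  proof -
    have "totatives p = {1..<p}" using p by (auto simp: totatives_prime)
    then show ?thesis using residue_primroot_is_generator[OF p1 r] p by (simp add: totient_prime)
  qed
  have "N \<in> \<int>"
  proof (rule int_of_invariant[OF p, of "\<Prod>i<n. pcompose Y (Polynomial.monom 1 (r ^ i))"])
    fix a assume a: "a \<in> {1..<p}"
    then obtain k where k: "k < p - 1" "r ^ k mod p = a"
      using bij unfolding bij_betw_def by (metis (no_types, lifting) imageE lessThan_iff)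
    have "ev (\<Prod>i<n. pcompose Y (Polynomial.monom 1 (r ^ i))) (zeta p ^ a) =
          (\<Prod>i<n. ev Y (zeta p ^ (a * r ^ i)))" by (simp add: power_mult)
    also have "\<dots> = (\<Prod>i<n. f (k + i))"
    proof (rule prod.cong[OF refl])
      fix i
      have "(a * r ^ i) mod p = (r ^ (k + i)) mod p"
        using k(2) by (metis mod_mult_left_eq power_add)
      then have "zeta p ^ (a * r ^ i) = zeta p ^ (r ^ (k + i))" using p1 by (simp add: zeta_pow_eq)
      then show "ev Y (zeta p ^ (a * r ^ i)) = f (k + i)"
        unfolding f_def by simp
    qed
    also have "\<dots> = N" unfolding N_def by (rule prod_shift_periodic[of f n, OF perf n])
    finally show "ev (\<Prod>i<n. pcompose Y (Polynomial.monom 1 (r ^ i))) (zeta p ^ a) = N" .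
  qed
  then obtain Ni where Ni: "N = of_int Ni" by (elim Ints_cases)
  define M where "M = (\<Prod>a\<in>{1..<p}. ev W (zeta p ^ a))"
  have "M \<in> \<int>"
  proof (rule int_of_invariant[OF p, of "\<Prod>a\<in>{1..<p}. pcompose W (Polynomial.monom 1 a)"])
    fix b assume b: "b \<in> {1..<p}"
    then have nb: "\<not> p dvd b" by (auto dest: dvd_imp_le)
    have "ev (\<Prod>a\<in>{1..<p}. pcompose W (Polynomial.monom 1 a)) (zeta p ^ b) =
          (\<Prod>a\<in>{1..<p}. ev W (zeta p ^ (b * a)))" by (simp add: power_mult)
    also have "\<dots> = M" unfolding M_def by (rule prod_reindex_mult[OF p nb])
    finally show "ev (\<Prod>a\<in>{1..<p}. pcompose W (Polynomial.monom 1 a)) (zeta p ^ b) = M" .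
  qed
  then obtain Mi where Mi: "M = of_int Mi" by (elim Ints_cases)
  have "(\<Prod>a\<in>{1..<p}. ev Y (zeta p ^ a)) = (\<Prod>a\<in>{1..<p}. (1 - zeta p ^ a)) ^ m * M"
    unfolding YW M_def by (simp add: prod.distrib prod_power_distrib)
  also have "\<dots> = of_nat p ^ m * M" using prod_one_minus_zeta[OF p1] by simp
  finally have rel1: "(\<Prod>a\<in>{1..<p}. ev Y (zeta p ^ a)) = of_nat p ^ m * M" .
  have "(\<Prod>a\<in>{1..<p}. ev Y (zeta p ^ a)) = (\<Prod>k<p-1. f k)"
    unfolding f_def by (rule prod_reindex_primroot[OF p r])
  also have "\<dots> = (\<Prod>k<e*n. f k)" using en by simp
  also have "\<dots> = (\<Prod>q<e. prod f {q*n..<q*n+n})" by (rule prod.nat_group[symmetric])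
  also have "\<dots> = (\<Prod>q<e. N)"
  proof (rule prod.cong[OF refl])
    fix q
    have "prod f {q*n..<q*n+n} = prod f {0 + q*n..<n + q*n}" by (simp add: add.commute)
    also have "\<dots> = (\<Prod>i\<in>{0..<n}. f (i + q*n))" by (rule prod.shift_bounds_nat_ivl)
    also have "\<dots> = (\<Prod>i\<in>{0..<n}. f i)"
      using periodic_mod[of f n, OF perf] by (simp add: add.commute)
    finally show "prod f {q*n..<q*n+n} = N" unfolding N_def by (simp add: atLeast0LessThan)
  qed
  also have "\<dots> = N ^ e" by simp
  finally have rel2: "N ^ e = of_nat p ^ m * M" using rel1 by simp
  have "(of_int (Ni ^ e) :: complex) = of_int (int p ^ m * Mi)"
    using rel2 Ni Mi by simp
  then have eq: "Ni ^ e = int p ^ m * Mi" by (simp only: of_int_eq_iff)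
  have "N \<noteq> 0" unfolding N_def f_def using allnz primroot_not_dvd[OF p r] by simp
  then have "Ni \<noteq> 0" using Ni by simp
  have "M \<noteq> 0"
  proof -
    have "ev W (zeta p ^ a) \<noteq> 0" if "a \<in> {1..<p}" for a
    proof -
      have "\<not> p dvd a" using that by (auto dest: dvd_imp_le)
      then have "ev Y (zeta p ^ a) \<noteq> 0" by (rule allnz)
      then show ?thesis unfolding YW by simp
    qed
    then show ?thesis unfolding M_def by simp
  qed
  then have "Mi \<noteq> 0" using Mi by simp
  show ?thesis using Ni \<open>Ni \<noteq> 0\<close> \<open>Mi \<noteq> 0\<close> eq unfolding N_def e_def f_def by blast
qed



lemma norm_bound:
  fixes Ni Mi :: int and p n m e :: nat
  assumes p: "prime p" and n: "odd n" "n > 1" and ndvd: "n dvd (p - 1)"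
    and e: "e = (p - 1) div n" and m: "m = (p + 1) div 2"
    and Ni: "Ni \<noteq> 0" and Mi: "Mi \<noteq> 0" and eq: "Ni ^ e = int p ^ m * Mi"
  shows "int p ^ ((n + 1) div 2) \<le> \<bar>Ni\<bar>"
proof -
  have p1: "p > 1" using p prime_gt_1_nat by blast
  have pn: "p - 1 \<ge> n" using ndvd p1 n by (intro dvd_imp_le) auto
  have "p \<noteq> 2" using pn n by auto
  then have podd: "odd p" using p by (metis primes_dvd_imp_eq two_is_prime_nat dvd_def oddE even_iff_mod_2_eq_zero)
  have en: "e * n = p - 1" using ndvd e by simp
  define h where "h = (n + 1) div 2"
  have ip: "prime (int p)" using p by simp
  have nu: "\<not> is_unit (int p)" using p1 by simp
  have "int p ^ h dvd Ni"
  proof (rule ccontr)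
    assume nd: "\<not> int p ^ h dvd Ni"
    define v where "v = multiplicity (int p) Ni"
    have vlt: "v < h" unfolding v_def using multiplicity_lessI[OF Ni nu nd] .
    have "int p ^ m dvd Ni ^ e" using eq by simp
    then have "m \<le> multiplicity (int p) (Ni ^ e)"
      using multiplicity_geI[of "Ni ^ e" "int p" m] Ni nu by simp
    also have "\<dots> = e * v" unfolding v_def
      using prime_elem_multiplicity_power_distrib[of "int p" Ni e] ip Ni by simp
    finally have me: "m \<le> e * v" .
    have "2 * m = p + 1" using podd m by simp
    moreover have "2 * v \<le> n - 1"
    proof -
      obtain k where k: "n = 2 * k + 1" using n(1) by (elim oddE)
      then show ?thesis using vlt h_def by simp
    qed
    then have "2 * (e * v) \<le> e * (n - 1)" by (metis mult.left_commute mult_le_mono2)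
    moreover have "e * (n - 1) < p + 1" using en by (simp add: diff_mult_distrib2)
    ultimately show False using me by linarith
  qed
  then have "\<bar>int p ^ h\<bar> \<le> \<bar>Ni\<bar>" using Ni by (intro dvd_imp_le_int) auto
  then show ?thesis unfolding h_def by simp
qed



definition ZP :: "nat \<Rightarrow> nat \<Rightarrow> int \<Rightarrow> int poly" where
  "ZP p r lam = Polynomial.monom 1 (nat (lam mod int p)) *
     (\<Prod>j\<in>{0..(p - 3) div 2}. (1 - Polynomial.monom 1 (r ^ j))) * [:1, -1:]"

definition XP :: "nat \<Rightarrow> nat \<Rightarrow> nat \<Rightarrow> int \<Rightarrow> int poly" where
  "XP n p r lam = (\<Sum>j\<in>{1..(p - 1) div n}. pcompose (ZP p r lam) (Polynomial.monom 1 (r ^ (j * n))))"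

definition Gp :: "nat \<Rightarrow> nat \<Rightarrow> nat \<Rightarrow> int \<Rightarrow> nat \<Rightarrow> int poly" where
  "Gp n p r lam t = pcompose (XP n p r lam) (Polynomial.monom 1 (r ^ t))"

definition G :: "nat \<Rightarrow> nat \<Rightarrow> nat \<Rightarrow> int \<Rightarrow> nat \<Rightarrow> int poly" where
  "G n p r lam l = (if l = 0 then Gp n p r lam 0 + Gp n p r lam 1
      else if l = 1 then Gp n p r lam 0 - Gp n p r lam 1
      else Gp n p r lam (l - 1) - Gp n p r lam l)"

definition Ya :: "nat \<Rightarrow> nat \<Rightarrow> nat \<Rightarrow> int \<Rightarrow> (nat \<Rightarrow> int) \<Rightarrow> int poly" where
  "Ya n p r lam a = (\<Sum>l<n. Polynomial.smult (a l) (G n p r lam l))"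

lemma powi_root_unity:
  fixes w :: complex
  assumes p: "p > 0" and w: "w ^ p = 1"
  shows "w powi lam = w ^ nat (lam mod int p)"
proof -
  have wnz: "w \<noteq> 0" using w p by (metis power_0_left less_not_refl2 zero_neq_one)
  define c where "c = nat (lam mod int p)"
  define q where "q = lam div int p"
  have lam: "lam = int c + int p * q"
    using p by (simp add: c_def q_def)
  have "w powi lam = w powi (int c) * w powi (int p * q)"
    unfolding lam by (rule power_int_add) (simp add: wnz)
  also have "w powi (int p * q) = (w powi int p) powi q"
    by (rule power_int_mult)
  also have "\<dots> = 1" using w by simp
  finally have "w powi lam = w powi int c" by simp
  then show ?thesis unfolding c_def by (simp only: power_int_of_nat)
qed

lemma ev_one_minus_monom [simp]: "ev (1 - Polynomial.monom 1 k) x = 1 - x ^ k"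
  by simp

lemma zfun_ev:
  assumes "p > 0"
  shows "zfun p r lam (zeta p ^ t) = ev (ZP p r lam) (zeta p ^ t)"
proof -
  have "(zeta p ^ t) ^ p = 1" using assms
    by (simp flip: power_mult add: mult.commute[of t] power_mult zeta_pow_p)
  then have "(zeta p ^ t) powi lam = (zeta p ^ t) ^ nat (lam mod int p)"
    by (rule powi_root_unity[OF assms])
  then show ?thesis unfolding zfun_def ZP_def ev_mult ev_lin ev_prod ev_one_minus_monom ev_monom
    by simp
qed

lemma sigx_ev:
  assumes "p > 0"
  shows "sigx n p r lam k = ev (XP n p r lam) (zeta p ^ (r ^ k))"
  unfolding sigx_def XP_def
proof (simp, rule sum.cong[OF refl])
  fix j
  have X: "zfun p r lam (zeta p ^ r ^ (j * n + k)) = ev (ZP p r lam) (zeta p ^ r ^ (j * n + k))"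
    by (rule zfun_ev[OF assms])
  have eq: "zeta p ^ r ^ (j * n + k) = (zeta p ^ r ^ k) ^ r ^ (j * n)"
    by (simp add: power_add flip: power_mult) (simp add: mult.commute)
  from X show "zfun p r lam (zeta p ^ r ^ (j * n + k)) = ev (ZP p r lam) ((zeta p ^ r ^ k) ^ r ^ (j * n))"
    unfolding eq .
qed

lemma Gp_ev:
  assumes "p > 0"
  shows "ev (Gp n p r lam t) (zeta p ^ (r ^ k)) = sigx n p r lam (k + t)"
  unfolding Gp_def sigx_ev[OF assms]
  by (simp add: power_add flip: power_mult)

lemma G_ev:
  assumes "p > 0"
  shows "ev (G n p r lam l) (zeta p ^ (r ^ k)) = sig_gen n p r lam l k"
proof -
  have "l \<ge> 2 \<Longrightarrow> k + l - 1 = k + (l - 1)" by simp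
  then show ?thesis unfolding G_def sig_gen_def by (simp add: Gp_ev[OF assms])
qed

lemma Ya_ev:
  assumes "p > 0"
  shows "ev (Ya n p r lam a) (zeta p ^ (r ^ k)) = (\<Sum>l<n. of_int (a l) * sig_gen n p r lam l k)"
  unfolding Ya_def by (simp add: G_ev[OF assms])

lemma sigx_periodic:
  assumes p: "prime p" and r: "residue_primroot p r" and n: "n > 0" and ndvd: "n dvd (p - 1)"
  shows "sigx n p r lam (k + n) = sigx n p r lam k"
proof -
  have p1: "p > 1" using p prime_gt_1_nat by blast
  define e where "e = (p - 1) div n"
  have en: "e * n = p - 1" using ndvd by (simp add: e_def)
  have e1: "e \<ge> 1" using en p1 by (metis One_nat_def Suc_leI mult_is_0 neq0_conv zero_less_diff)
  define F where "F j = zfun p r lam (zeta p ^ r ^ (j * n + k))" for j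
  have s0: "sigx n p r lam k = sum F {1..e}" unfolding sigx_def F_def e_def ..
  have "sigx n p r lam (k + n) = (\<Sum>j\<in>{1..e}. F (Suc j))"
    unfolding sigx_def F_def e_def by (intro sum.cong refl) (simp add: algebra_simps)
  also have "\<dots> = sum F {Suc 1..Suc e}" by (rule sum.shift_bounds_cl_Suc_ivl[symmetric])
  also have "\<dots> = sum F {2..e} + F (Suc e)" using e1 by (simp add: sum.cl_ivl_Suc numeral_2_eq_2)
  also have "F (Suc e) = F 1"
  proof -
    have ndr: "\<not> p dvd r" using primroot_not_dvd[OF p r, of 1] by simp
    have "[r ^ (p - 1) = 1] (mod p)" by (rule fermat_theorem[OF p ndr])
    then have "[r ^ (p - 1) * r ^ (n + k) = 1 * r ^ (n + k)] (mod p)" by (rule cong_mult) simp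
    moreover have "r ^ (Suc e * n + k) = r ^ (p - 1) * r ^ (n + k)"
      using en by (simp add: power_add[symmetric] algebra_simps)
    ultimately have "r ^ (Suc e * n + k) mod p = r ^ (1 * n + k) mod p" by (simp add: cong_def)
    then have "zeta p ^ r ^ (Suc e * n + k) = zeta p ^ r ^ (1 * n + k)" using p1 by (simp add: zeta_pow_eq)
    then show ?thesis unfolding F_def by simp
  qed
  also have "sum F {2..e} + F 1 = sum F {1..e}"
    using e1 by (simp add: sum.atLeast_Suc_atMost add.commute numeral_2_eq_2)
  finally show ?thesis using s0 by simp
qed

lemma Ya_periodic:
  assumes p: "prime p" and r: "residue_primroot p r" and n: "n > 0" and ndvd: "n dvd (p - 1)"
  shows "ev (Ya n p r lam a) (zeta p ^ (r ^ (k + n))) = ev (Ya n p r lam a) (zeta p ^ (r ^ k))"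
proof -
  have p0: "p > 0" using p prime_gt_0_nat by blast
  have "sig_gen n p r lam l (k + n) = sig_gen n p r lam l k" for l
  proof -
    have *: "sigx n p r lam (k + n + t) = sigx n p r lam (k + t)" for t
      using sigx_periodic[OF p r n ndvd, of lam "k + t"] by (simp add: algebra_simps)
    show ?thesis unfolding sig_gen_def using *[of 0] *[of 1] *[of "l - 1"] *[of l]
      by (cases "l \<ge> 2") (auto simp: algebra_simps)
  qed
  then show ?thesis by (simp add: Ya_ev[OF p0])
qed



lemma one_minus_monom_eq: "1 - Polynomial.monom (1::int) k = [:1, -1:] * cyc k"
proof -
  have D: "[:1, -1::int:] = - [:-1, 1:]" by simp
  show ?thesis by (simp only: D mult_minus_left cyc_times minus_diff_eq)
qed

lemma pcompose_D: "pcompose [:1, -1:] (Polynomial.monom (1::int) s) = 1 - Polynomial.monom 1 s"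
  by (simp add: pcompose_pCons one_pCons[symmetric] algebra_simps)

lemma dvd_pcompose_monom:
  assumes "[:1, -1:] ^ m dvd F"
  shows "[:1, -1:] ^ m dvd pcompose F (Polynomial.monom (1::int) s)"
proof -
  obtain W0 where F: "F = [:1, -1:] ^ m * W0" using assms by (elim dvdE)
  have "pcompose F (Polynomial.monom 1 s) = ([:1, -1:] * cyc s) ^ m * pcompose W0 (Polynomial.monom 1 s)"
    unfolding F pcompose_mult pcompose_power' pcompose_D one_minus_monom_eq ..
  also have "\<dots> = [:1, -1:] ^ m * (cyc s ^ m * pcompose W0 (Polynomial.monom 1 s))"
    by (simp only: power_mult_distrib mult_ac)
  finally show ?thesis by simp
qed

lemma ZP_dvd:
  assumes "odd p" "p \<ge> 3"
  shows "[:1, -1:] ^ ((p + 1) div 2) dvd ZP p r lam"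
proof -
  define J where "J = {0..(p - 3) div 2}"
  have cJ: "Suc (card J) = (p + 1) div 2" using assms unfolding J_def by (auto elim!: oddE)
  have "(\<Prod>j\<in>J. [:1, -1:]) dvd (\<Prod>j\<in>J. (1 - Polynomial.monom (1::int) (r ^ j)))"
    by (rule prod_dvd_prod) (simp only: one_minus_monom_eq dvd_triv_left)
  then have "[:1, -1:] ^ card J * [:1, -1:] dvd (\<Prod>j\<in>J. (1 - Polynomial.monom (1::int) (r ^ j))) * [:1, -1:]"
    unfolding prod_constant by (rule mult_dvd_mono[OF _ dvd_refl])
  then have "[:1, -1:] ^ ((p + 1) div 2) dvd Polynomial.monom 1 (nat (lam mod int p)) * ((\<Prod>j\<in>J. (1 - Polynomial.monom (1::int) (r ^ j))) * [:1, -1:])"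
    unfolding cJ[symmetric] power_Suc2 by (rule dvd_mult)
  then show ?thesis unfolding ZP_def J_def by (simp only: mult.assoc)
qed

lemma Ya_dvd:
  assumes "odd p" "p \<ge> 3"
  shows "[:1, -1:] ^ ((p + 1) div 2) dvd Ya n p r lam a"
proof -
  have X: "[:1, -1:] ^ ((p + 1) div 2) dvd XP n p r lam"
    unfolding XP_def by (intro dvd_sum dvd_pcompose_monom ZP_dvd assms)
  have "[:1, -1:] ^ ((p + 1) div 2) dvd Gp n p r lam t" for t
    unfolding Gp_def by (rule dvd_pcompose_monom[OF X])
  then have "[:1, -1:] ^ ((p + 1) div 2) dvd G n p r lam l" for l
    unfolding G_def by simp
  then show ?thesis unfolding Ya_def by (intro dvd_sum dvd_smult)
qed



theorem corollary2:
  fixes n p r :: nat and lam :: int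
  assumes "n > 1" and "odd n"
    and "prime p" and "[p = 1] (mod n)"
    and "residue_primroot p r"
    and "[lam * (int r - 1) = 1] (mod int p)"
    and "sigx n p r lam 0 \<noteq> 0"
    and "sigx n p r lam 1 / sigx n p r lam 0 \<in> Zzeta p"
  shows "dpmin n (phiM n p r lam (1 / (real p)^2)) \<ge> real p powr ((1 - real n) / 2)"
proof -
  note n1 = assms(1) and nodd = assms(2) and p = assms(3) and pn = assms(4) and r = assms(5)
    and sx = assms(7)
  have p1: "p > 1" using p prime_gt_1_nat by blast
  have p0: "p > 0" using p1 by simp
  have n0: "n > 0" using n1 by simp
  have ndvd: "n dvd (p - 1)" using pn by (rule cong_to_1_nat)
  have pge: "p - 1 \<ge> n" using ndvd p1 n1 by (intro dvd_imp_le) auto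
  have "p \<noteq> 2" using pge n1 by auto
  then have podd: "odd p" using p by (metis primes_dvd_imp_eq two_is_prime_nat dvd_def oddE even_iff_mod_2_eq_zero)
  have p3: "p \<ge> 3" using pge n1 by auto
  define h where "h = (n + 1) div 2"
  define m where "m = (p + 1) div 2"
  define bound where "bound = real p powr ((1 - real n) / 2)"
  have hn: "real h = (real n + 1) / 2" using nodd unfolding h_def by (auto elim!: oddE)
  have bnd: "bound = real p ^ h / real p ^ n"
  proof -
    have e: "(1 - real n) / 2 = real h - real n" using hn by simp
    have "bound = real p powr (real h - real n)" by (simp only: bound_def e)
    also have "\<dots> = real p powr real h / real p powr real n" by (rule powr_diff)
    also have "\<dots> = real p ^ h / real p ^ n" using p1 by (simp add: powr_realpow)
    finally show ?thesis .
  qed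
  have sq: "sqrt (1 / (real p)^2) = 1 / real p" using p1 by (simp add: real_sqrt_divide)
  define S where "S = {cmod (\<Prod>i<n. v i) | v. v \<in> phiM n p r lam (1 / (real p)^2) \<and> (\<exists>i<n. v i \<noteq> 0)}"
  have vform: "(\<lambda>i. of_real (sqrt (1 / (real p)^2)) * (\<Sum>l<n. of_int (a l) * sig_gen n p r lam l i)) =
      (\<lambda>i. of_real (1 / real p) * ev (Ya n p r lam a) (zeta p ^ (r ^ i)))" for a
    by (simp add: sq Ya_ev[OF p0])
  have lower: "bound \<le> x" if "x \<in> S" for x
  proof -
    from that obtain v where x: "x = cmod (\<Prod>i<n. v i)" and v: "v \<in> phiM n p r lam (1 / (real p)^2)"
      and nz: "\<exists>i<n. v i \<noteq> 0" unfolding S_def by blast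
    from v obtain a where va: "v = (\<lambda>i. of_real (1 / real p) * ev (Ya n p r lam a) (zeta p ^ (r ^ i)))"
      unfolding phiM_def vform by blast
    define Y where "Y = Ya n p r lam a"
    from nz obtain i0 where "v i0 \<noteq> 0" by blast
    then have nz0: "ev Y (zeta p ^ (r ^ i0)) \<noteq> 0" unfolding va Y_def by simp
    obtain W where YW: "Y = [:1, -1:] ^ m * W"
      using Ya_dvd[OF podd p3, of n r lam a] unfolding m_def Y_def by (elim dvdE)
    have per: "\<And>k. ev Y (zeta p ^ (r ^ (k + n))) = ev Y (zeta p ^ (r ^ k))"
      unfolding Y_def by (rule Ya_periodic[OF p r n0 ndvd])
    obtain Ni Mi where NM: "(\<Prod>i<n. ev Y (zeta p ^ (r ^ i))) = of_int Ni" "Ni \<noteq> 0" "Mi \<noteq> 0"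
        "Ni ^ ((p - 1) div n) = int p ^ m * Mi"
      using norm_int[OF p r n0 ndvd per YW nz0] by blast
    have bN: "int p ^ h \<le> \<bar>Ni\<bar>"
      unfolding h_def by (rule norm_bound[OF p nodd n1 ndvd refl m_def NM(2) NM(3) NM(4)])
    have "(\<Prod>i<n. v i) = of_real (1 / real p) ^ n * of_int Ni"
      unfolding va Y_def[symmetric] by (simp only: prod.distrib prod_constant card_lessThan NM(1))
    then have "x = (1 / real p) ^ n * \<bar>real_of_int Ni\<bar>"
      unfolding x by (simp add: norm_mult norm_power norm_divide)
    moreover have "real p ^ h \<le> \<bar>real_of_int Ni\<bar>"
      using bN by (metis of_int_abs of_int_le_iff of_int_of_nat_eq of_int_power)
    ultimately have "x \<ge> (1 / real p) ^ n * real p ^ h"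
      by (simp add: mult_left_mono)
    then show ?thesis unfolding bnd by (simp add: field_simps)
  qed
  have "S \<noteq> {}"
  proof -
    have ex: "\<exists>l0\<in>{0, 1}. sig_gen n p r lam l0 0 \<noteq> 0"
    proof (rule ccontr)
      assume "\<not> ?thesis"
      then have "sig_gen n p r lam 0 0 = 0" "sig_gen n p r lam 1 0 = 0" by auto
      then have "sigx n p r lam 0 + sigx n p r lam 1 = 0" "sigx n p r lam 0 - sigx n p r lam 1 = 0"
        unfolding sig_gen_def by simp_all
      then have "sigx n p r lam 0 = 0" by (simp add: algebra_simps)
      then show False using sx by simp
    qed
    then obtain l0 where l0: "l0 \<in> {0, 1}" "sig_gen n p r lam l0 0 \<noteq> 0" by blast
    have l0n: "l0 < n" using l0(1) n1 by auto
    define a :: "nat \<Rightarrow> int" where "a l = (if l = l0 then 1 else 0)" for l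
    define v where "v = (\<lambda>i. of_real (sqrt (1 / (real p)^2)) * (\<Sum>l<n. of_int (a l) * sig_gen n p r lam l i))"
    have vin: "v \<in> phiM n p r lam (1 / (real p)^2)" unfolding phiM_def v_def by blast
    have "(\<Sum>l<n. of_int (a l) * sig_gen n p r lam l 0) = (\<Sum>l<n. if l = l0 then sig_gen n p r lam l 0 else 0)"
      by (intro sum.cong) (auto simp: a_def)
    also have "\<dots> = sig_gen n p r lam l0 0" using l0n by (simp add: sum.delta)
    finally have sv: "(\<Sum>l<n. of_int (a l) * sig_gen n p r lam l 0) = sig_gen n p r lam l0 0" .
    have "v 0 \<noteq> 0" unfolding v_def sv using l0(2) sq p1 by simp
    then have "cmod (\<Prod>i<n. v i) \<in> S" unfolding S_def using vin n0 by blast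
    then show ?thesis by blast
  qed
  have "bound \<le> Inf S" by (rule cInf_greatest[OF \<open>S \<noteq> {}\<close> lower])
  then show ?thesis unfolding dpmin_def bound_def S_def .
qed

end
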